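(* Let $a,d\in\mathbb C$ with $a\notin\mathbb Z$ and $d\notin\{0,-1,-2,\dots\}$. Then, as an identity of formal power series in $x,y$, $$\mathrm H_5(a;d;x,y)={}_1F_1(a;d;x)\,{}_0F_1(1-a;-y)+\sum_{k=1}^\infty\sum_{l=1}^k\frac{(-1)^{k+l}(k-1)!}{(l-1)!\,l!\,(k-l)!}\,\frac{1}{(1-a)_l(d)_k}\,x^ky^l\,{}_1F_1(a+k;d+k;x)\,{}_0F_1(1-a+l;-y).$$
   Context: Pochhammer symbol: $(\lambda)_k=\Gamma(\lambda+k)/\Gamma(\lambda)$ for every integer $k$ (possibly negative) whenever defined; $(\lambda)_0=1$. ${}_1F_1(a;c;x)=\sum_{k\ge0}\frac{(a)_k}{(c)_k k!}x^k$, ${}_0F_1(c;x)=\sum_{k\ge0}\frac{x^k}{(c)_k k!}$. Confluent Horn function $\mathrm H_5(a;d;x,y)=\sum_{p,q\ge0}\frac{(a)_{p-q}}{(d)_p\,p!\,q!}x^py^q$. All functions are regarded as formal power series in $x,y$; the infinite double sum converges in the formal (degree) topology. *)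

theory Defs
  imports Complex_Main
begin

text \<open>Formal power series in two variables x, y over the complex numbers, represented by
  their coefficient function: f p q is the coefficient of x^p y^q.\<close>
type_synonym bfps = "nat \<Rightarrow> nat \<Rightarrow> complex"

definition bmul :: "bfps \<Rightarrow> bfps \<Rightarrow> bfps" where
  "bmul f g = (\<lambda>p q. \<Sum>i\<le>p. \<Sum>j\<le>q. f i j * g (p - i) (q - j))"

definition bsmult :: "complex \<Rightarrow> bfps \<Rightarrow> bfps" where
  "bsmult c f = (\<lambda>p q. c * f p q)"

definition badd :: "bfps \<Rightarrow> bfps \<Rightarrow> bfps" where
  "badd f g = (\<lambda>p q. f p q + g p q)"

definition bmonom :: "nat \<Rightarrow> nat \<Rightarrow> bfps" where
  "bmonom k l = (\<lambda>p q. if p = k \<and> q = l then 1 else 0)"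

definition ser_x :: "(nat \<Rightarrow> complex) \<Rightarrow> bfps" where
  "ser_x c = (\<lambda>p q. if q = 0 then c p else 0)"

definition ser_y :: "(nat \<Rightarrow> complex) \<Rightarrow> bfps" where
  "ser_y c = (\<lambda>p q. if p = 0 then c q else 0)"

definition neg_y :: "bfps \<Rightarrow> bfps" where
  "neg_y f = (\<lambda>p q. (-1) ^ q * f p q)"

text \<open>Pochhammer symbol with integer index: (\<lambda>)_k = \<Gamma>(\<lambda>+k)/\<Gamma>(\<lambda>);
  for k = -m < 0 this is 1 / ((\<lambda>-m)(\<lambda>-m+1)...(\<lambda>-1)).\<close>
definition poch_int :: "complex \<Rightarrow> int \<Rightarrow> complex" where
  "poch_int lam k = (if k \<ge> 0 then pochhammer lam (nat k)
                     else 1 / pochhammer (lam + of_int k) (nat (- k)))"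

definition hyp1F1_coeff :: "complex \<Rightarrow> complex \<Rightarrow> nat \<Rightarrow> complex" where
  "hyp1F1_coeff a c n = pochhammer a n / (pochhammer c n * fact n)"

definition hyp0F1_coeff :: "complex \<Rightarrow> nat \<Rightarrow> complex" where
  "hyp0F1_coeff c n = 1 / (pochhammer c n * fact n)"

definition F11_x :: "complex \<Rightarrow> complex \<Rightarrow> bfps" where
  "F11_x a c = ser_x (hyp1F1_coeff a c)"

definition F01_negy :: "complex \<Rightarrow> bfps" where
  "F01_negy c = neg_y (ser_y (hyp0F1_coeff c))"

definition H5 :: "complex \<Rightarrow> complex \<Rightarrow> bfps" where
  "H5 a d = (\<lambda>p q. poch_int a (int p - int q) / (pochhammer d p * fact p * fact q))"

text \<open>Formal (degree-topology) summability and sum of a family of bivariate series: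
  each coefficient receives nonzero contributions from only finitely many members.\<close>
definition formal_summable :: "'i set \<Rightarrow> ('i \<Rightarrow> bfps) \<Rightarrow> bool" where
  "formal_summable I F \<longleftrightarrow> (\<forall>p q. finite {i \<in> I. F i p q \<noteq> 0})"

definition formal_sum :: "'i set \<Rightarrow> ('i \<Rightarrow> bfps) \<Rightarrow> bfps" where
  "formal_sum I F = (\<lambda>p q. \<Sum>i \<in> {i \<in> I. F i p q \<noteq> 0}. F i p q)"

end

theory Submission
  imports Defs
begin

lemma sum_pascal:
  fixes g :: "nat \<Rightarrow> complex"
  shows "(\<Sum>k\<le>Suc p. of_nat (Suc p choose k) * g k) = (\<Sum>k\<le>p. of_nat (p choose k) * (g k + g (Suc k)))"
proof -
  have "(\<Sum>k\<le>Suc p. of_nat (Suc p choose k) * g k) = g 0 + (\<Sum>k\<le>p. of_nat (Suc p choose Suc k) * g (Suc k))"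
    by (subst sum.atMost_Suc_shift) simp
  also have "\<dots> = g 0 + (\<Sum>k\<le>p. of_nat (p choose k) * g (Suc k)) + (\<Sum>k\<le>p. of_nat (p choose Suc k) * g (Suc k))"
    by (simp add: sum.distrib algebra_simps)
  also have "(\<Sum>k\<le>p. of_nat (p choose k) * g k) = g 0 + (\<Sum>k\<le>p. of_nat (p choose Suc k) * g (Suc k))"
  proof -
    have "(\<Sum>k\<le>p. of_nat (p choose k) * g k) = (\<Sum>k\<le>Suc p. of_nat (p choose k) * g k)"
      by simp
    also have "\<dots> = g 0 + (\<Sum>k\<le>p. of_nat (p choose Suc k) * g (Suc k))"
      by (subst sum.atMost_Suc_shift) simp
    finally show ?thesis .
  qed
  ultimately show ?thesis by (simp add: sum.distrib algebra_simps)
qed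

lemma L1:
  fixes a :: complex
  shows "pochhammer (a - of_nat q) p = (\<Sum>k\<le>p. of_nat (p choose k) * ((-1)^k * pochhammer (of_nat q) k * pochhammer (a + of_nat k) (p - k)))"
proof (induction p arbitrary: a)
  case 0
  then show ?case by simp
next
  case (Suc p)
  let ?g = "\<lambda>k. (-1::complex)^k * pochhammer (of_nat q) k * pochhammer (a + of_nat k) (Suc p - k)"
  have "(\<Sum>k\<le>Suc p. of_nat (Suc p choose k) * ?g k) = (\<Sum>k\<le>p. of_nat (p choose k) * (?g k + ?g (Suc k)))"
    by (rule sum_pascal)
  also have "\<dots> = (\<Sum>k\<le>p. (a - of_nat q) * (of_nat (p choose k) * ((-1)^k * pochhammer (of_nat q) k * pochhammer (a + 1 + of_nat k) (p - k))))"
  proof (rule sum.cong[OF refl])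
    fix k assume "k \<in> {..p}"
    then have kp: "k \<le> p" by simp
    have e1: "Suc p - k = Suc (p - k)" using kp by simp
    have e2: "Suc p - Suc k = p - k" by simp
    have "?g k + ?g (Suc k) = (-1)^k * pochhammer (of_nat q) k * ((a + of_nat k) * pochhammer (a + 1 + of_nat k) (p - k))
        - (-1)^k * (pochhammer (of_nat q) k * (of_nat q + of_nat k)) * pochhammer (a + 1 + of_nat k) (p - k)"
    proof -
      have h1: "pochhammer (a + of_nat k) (Suc (p - k)) = (a + of_nat k) * pochhammer (a + 1 + of_nat k) (p - k)"
        by (simp add: pochhammer_rec add.commute add.left_commute)
      have h2: "pochhammer (of_nat q :: complex) (Suc k) = pochhammer (of_nat q) k * (of_nat q + of_nat k)"
        by (rule pochhammer_Suc)
      have h3: "a + of_nat (Suc k) = a + 1 + of_nat k" by simp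
      show ?thesis unfolding e1 e2 h1 h2 h3 by (simp add: algebra_simps)
    qed
    also have "\<dots> = (a - of_nat q) * ((-1)^k * pochhammer (of_nat q) k * pochhammer (a + 1 + of_nat k) (p - k))"
      by (simp add: algebra_simps)
    finally show "of_nat (p choose k) * (?g k + ?g (Suc k)) = (a - of_nat q) * (of_nat (p choose k) * ((-1)^k * pochhammer (of_nat q) k * pochhammer (a + 1 + of_nat k) (p - k)))"
      by simp
  qed
  also have "\<dots> = (a - of_nat q) * pochhammer (a + 1 - of_nat q) p"
    using Suc.IH[of "a+1"] by (simp add: sum_distrib_left)
  also have "\<dots> = pochhammer (a - of_nat q) (Suc p)"
    by (simp add: pochhammer_rec algebra_simps)
  finally show ?case by simp
qed

lemma poch_nz_d:
  fixes d :: complex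
  assumes "\<forall>n::nat. d \<noteq> - of_nat n"
  shows "pochhammer (d + of_nat m) n \<noteq> 0"
proof
  assume "pochhammer (d + of_nat m) n = 0"
  then obtain j where "d + of_nat m = - of_nat j" by (auto simp: pochhammer_eq_0_iff)
  then have "d = - of_nat (j + m)" by (simp add: algebra_simps)
  with assms show False by blast
qed

lemma poch_nz_a:
  fixes a :: complex
  assumes "a \<notin> \<int>"
  shows "pochhammer (a + of_int m) n \<noteq> 0"
proof
  assume "pochhammer (a + of_int m) n = 0"
  then obtain j where "a + of_int m = - of_nat j" by (auto simp: pochhammer_eq_0_iff)
  then have "a = of_int (- int j - m)" by (simp add: algebra_simps)
  then have "a \<in> \<int>" by (metis Ints_of_int)
  with assms show False by blast
qed

lemma L2:
  fixes a :: complex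
  assumes "a \<notin> \<int>"
  shows "poch_int a (int p - int q) * pochhammer (1 - a) q = (-1)^q * pochhammer (a - of_nat q) p"
proof -
  have m: "pochhammer (1 - a) q = (-1)^q * pochhammer (a - of_nat q) q"
    using pochhammer_minus[of "a - 1" q] by (simp add: algebra_simps)
  show ?thesis
  proof (cases "q \<le> p")
    case True
    then have "poch_int a (int p - int q) = pochhammer a (p - q)"
      by (simp add: poch_int_def nat_diff_distrib)
    moreover have "pochhammer (a - of_nat q) p = pochhammer (a - of_nat q) q * pochhammer a (p - q)"
      using pochhammer_product[OF True, of "a - of_nat q"] by simp
    ultimately show ?thesis using m by (simp add: algebra_simps)
  next
    case False
    then have e: "poch_int a (int p - int q) = 1 / pochhammer (a - of_nat q + of_nat p) (q - p)"
      by (simp add: poch_int_def of_nat_diff algebra_simps nat_diff_distrib)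
    have nz: "pochhammer (a - of_nat q + of_nat p) (q - p) \<noteq> 0"
      using poch_nz_a[OF assms, of "int p - int q" "q - p"] by (simp add: algebra_simps)
    have "pochhammer (a - of_nat q) q = pochhammer (a - of_nat q) p * pochhammer (a - of_nat q + of_nat p) (q - p)"
      using False by (intro pochhammer_product) simp
    then show ?thesis using m e nz by (simp add: field_simps)
  qed
qed

lemma L3:
  assumes "1 \<le> k"
  shows "(\<Sum>l\<in>{1..min k q}. of_nat ((k - 1 choose (l - 1)) * (q choose l)) :: complex) * fact k = pochhammer (of_nat q) k"
proof -
  have v: "(\<Sum>l\<le>k. (q choose l) * ((k - 1) choose (k - l))) = (q + (k - 1)) choose k"
    by (rule vandermonde)
  have "(\<Sum>l\<in>{1..min k q}. (k - 1 choose (l - 1)) * (q choose l)) = (\<Sum>l\<le>k. (q choose l) * ((k - 1) choose (k - l)))"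
  proof (rule sum.mono_neutral_cong_left)
    show "finite {..k}" by simp
    show "{1..min k q} \<subseteq> {..k}" by auto
    show "\<forall>i\<in>{..k} - {1..min k q}. (q choose i) * (k - 1 choose (k - i)) = 0"
      using assms by auto
    fix l assume "l \<in> {1..min k q}"
    then have "1 \<le> l" "l \<le> k" by auto
    then have "k - 1 choose (k - l) = k - 1 choose (l - 1)"
      using binomial_symmetric[of "l - 1" "k - 1"] by simp
    then show "(k - 1 choose (l - 1)) * (q choose l) = (q choose l) * (k - 1 choose (k - l))" by simp
  qed
  then have s: "(\<Sum>l\<in>{1..min k q}. of_nat ((k - 1 choose (l - 1)) * (q choose l)) :: complex) = of_nat ((q + (k - 1)) choose k)"
    using v by (metis of_nat_sum)
  have "(of_nat ((q + (k - 1)) choose k) :: complex) = pochhammer (of_nat q) k / fact k"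
    using assms by (simp add: binomial_gbinomial gbinomial_pochhammer' of_nat_diff)
  then show ?thesis using s by simp
qed

lemma delta_mult:
  assumes "finite A"
  shows "(\<Sum>j\<in>A. (if j = l then c else 0) * f j) = (if l \<in> A then c * f l else (0::complex))"
proof -
  have "(\<Sum>j\<in>A. (if j = l then c else 0) * f j) = (\<Sum>j\<in>A. if j = l then c * f l else 0)"
    by (rule sum.cong) auto
  then show ?thesis using assms by simp
qed

lemma bmul_monom:
  "bmul (bmonom k l) G p q = (if k \<le> p \<and> l \<le> q then G (p - k) (q - l) else 0)"
proof -
  have "bmul (bmonom k l) G p q = (\<Sum>i\<le>p. (if i = k then 1 else 0) * (\<Sum>j\<le>q. (if j = l then 1 else 0) * G (p-i) (q-j)))"
    unfolding bmul_def bmonom_def by (intro sum.cong refl) (auto simp: sum_distrib_left)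
  also have "\<dots> = (if k \<le> p \<and> l \<le> q then G (p - k) (q - l) else 0)"
    by (simp only: delta_mult finite_atMost atMost_iff) auto
  finally show ?thesis .
qed

lemma bmul_F:
  "bmul (F11_x b c) (F01_negy e) p q = hyp1F1_coeff b c p * ((-1)^q * hyp0F1_coeff e q)"
proof -
  have "bmul (F11_x b c) (F01_negy e) p q = (\<Sum>i\<le>p. (if i = p then 1 else 0) * (\<Sum>j\<le>q. (if j = 0 then 1 else 0) * (hyp1F1_coeff b c i * ((-1)^(q-j) * hyp0F1_coeff e (q-j)))))"
    unfolding bmul_def F11_x_def F01_negy_def ser_x_def ser_y_def neg_y_def by (intro sum.cong refl) (auto simp: sum_distrib_left intro!: sum.cong)
  also have "\<dots> = hyp1F1_coeff b c p * ((-1)^q * hyp0F1_coeff e q)"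
    by (simp only: delta_mult finite_atMost atMost_iff) auto
  finally show ?thesis .
qed

lemma L4:
  fixes a d :: complex
  assumes a: "a \<notin> \<int>" and d: "\<forall>n::nat. d \<noteq> - of_nat n"
    and kl: "1 \<le> l" "l \<le> k" "k \<le> p" "l \<le> q"
  shows "((-1) ^ (k + l) * fact (k - 1) / (fact (l - 1) * fact l * fact (k - l)) / (pochhammer (1 - a) l * pochhammer d k))
     * (hyp1F1_coeff (a + of_nat k) (d + of_nat k) (p - k) * ((-1)^(q - l) * hyp0F1_coeff (1 - a + of_nat l) (q - l)))
     * (pochhammer d p * fact p * fact q * pochhammer (1 - a) q)
   = (-1)^q * ((-1)^k * of_nat (p choose k) * fact k * pochhammer (a + of_nat k) (p - k) * of_nat ((k - 1 choose (l - 1)) * (q choose l)))"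
proof -
  have pd: "pochhammer d p = pochhammer d k * pochhammer (d + of_nat k) (p - k)"
    using kl by (intro pochhammer_product) simp
  have pa: "pochhammer (1 - a) q = pochhammer (1 - a) l * pochhammer (1 - a + of_nat l) (q - l)"
    using kl by (intro pochhammer_product) simp
  have fp: "(fact p :: complex) = of_nat (p choose k) * fact k * fact (p - k)"
    using arg_cong[OF binomial_fact_lemma[OF kl(3)], of "of_nat :: nat \<Rightarrow> complex"]
    by (simp add: algebra_simps)
  have fq: "(fact q :: complex) = of_nat (q choose l) * fact l * fact (q - l)"
    using arg_cong[OF binomial_fact_lemma[OF kl(4)], of "of_nat :: nat \<Rightarrow> complex"]
    by (simp add: algebra_simps)
  have kl1: "l - 1 \<le> k - 1" using kl by simp
  have kl2: "k - 1 - (l - 1) = k - l" using kl by simp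
  have fk: "(fact (k - 1) :: complex) = of_nat (k - 1 choose (l - 1)) * fact (l - 1) * fact (k - l)"
    using arg_cong[OF binomial_fact_lemma[OF kl1], of "of_nat :: nat \<Rightarrow> complex"] kl2
    by (simp add: algebra_simps)
  have sg: "(-1::complex) ^ (k + l) * (-1) ^ (q - l) = (-1)^q * (-1)^k"
  proof -
    have "(-1::complex) ^ (k + l) * (-1) ^ (q - l) = (-1) ^ (k + l + (q - l))" by (simp add: power_add)
    also have "k + l + (q - l) = q + k" using kl by simp
    finally show ?thesis by (simp add: power_add)
  qed
  have n1: "pochhammer d k \<noteq> 0" using poch_nz_d[OF d, of 0 k] by simp
  have n2: "pochhammer (d + of_nat k) (p - k) \<noteq> 0" using poch_nz_d[OF d] by simp
  have n3: "pochhammer (1 - a) l \<noteq> 0"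
  proof
    assume "pochhammer (1 - a) l = 0"
    then obtain j where "1 - a = - of_nat j" by (auto simp: pochhammer_eq_0_iff)
    then have "a = of_int (int j + 1)" by (simp add: algebra_simps)
    with a show False by (metis Ints_of_int)
  qed
  have n4: "pochhammer (1 - a + of_nat l) (q - l) \<noteq> 0"
  proof
    assume "pochhammer (1 - a + of_nat l) (q - l) = 0"
    then obtain j where "1 - a + of_nat l = - of_nat j" by (auto simp: pochhammer_eq_0_iff)
    then have "a = of_int (int j + int l + 1)" by (simp add: algebra_simps)
    with a show False by (metis Ints_of_int)
  qed
  show ?thesis
    unfolding hyp1F1_coeff_def hyp0F1_coeff_def pd pa fp fq fk
    using n1 n2 n3 n4 sg
    by (simp add: field_simps)
qed

theorem mainTheorem10:
  fixes a d :: complex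
  assumes "a \<notin> \<int>"
    and "\<forall>n::nat. d \<noteq> - of_nat n"
  defines "T \<equiv> (\<lambda>(k, l). bsmult
              ((-1) ^ (k + l) * fact (k - 1)
                 / (fact (l - 1) * fact l * fact (k - l))
                 / (pochhammer (1 - a) l * pochhammer d k))
              (bmul (bmonom k l)
                 (bmul (F11_x (a + of_nat k) (d + of_nat k))
                       (F01_negy (1 - a + of_nat l)))))"
  shows "formal_summable {(k, l). 1 \<le> l \<and> l \<le> k} T
    \<and> H5 a d = badd (bmul (F11_x a d) (F01_negy (1 - a)))
                     (formal_sum {(k, l). 1 \<le> l \<and> l \<le> k} T)"
proof -
  note a = assms(1) and d = assms(2)
  define I where "I = {(k, l). 1 \<le> l \<and> l \<le> (k::nat)}"
  define c where "c k l = ((-1) ^ (k + l) * fact (k - 1)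
                 / (fact (l - 1) * fact l * fact (k - l))
                 / (pochhammer (1 - a) l * pochhammer d k) :: complex)" for k l :: nat
  have Tval: "T (k, l) p q = (if k \<le> p \<and> l \<le> q then c k l * (hyp1F1_coeff (a + of_nat k) (d + of_nat k) (p - k) * ((-1)^(q - l) * hyp0F1_coeff (1 - a + of_nat l) (q - l))) else 0)"
    for k l p q
    by (simp add: T_def bsmult_def bmul_monom bmul_F c_def)
  have sub: "{i \<in> I. T i p q \<noteq> 0} \<subseteq> {..p} \<times> {..q}" for p q
    by (auto simp: Tval split: if_splits)
  have summ: "formal_summable I T"
    unfolding formal_summable_def using sub by (meson finite_SigmaI finite_atMost finite_subset)
  have coeff: "H5 a d p q = badd (bmul (F11_x a d) (F01_negy (1 - a))) (formal_sum I T) p q" for p q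
  proof -
    define S where "S = Sigma {1..p} (\<lambda>k. {1..min k q})"
    have fs: "formal_sum I T p q = (\<Sum>i\<in>S. T i p q)"
      unfolding formal_sum_def
    proof (rule sum.mono_neutral_left)
      show "finite S" unfolding S_def by simp
      show "{i \<in> I. T i p q \<noteq> 0} \<subseteq> S"
        by (auto simp: S_def I_def Tval split: if_splits)
      show "\<forall>i\<in>S - {i \<in> I. T i p q \<noteq> 0}. T i p q = 0"
        by (auto simp: S_def I_def)
    qed
    also have "\<dots> = (\<Sum>k\<in>{1..p}. \<Sum>l\<in>{1..min k q}. T (k, l) p q)"
      unfolding S_def by (subst sum.Sigma) auto
    finally have fs2: "formal_sum I T p q = (\<Sum>k\<in>{1..p}. \<Sum>l\<in>{1..min k q}. T (k, l) p q)" .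
    define D where "D = pochhammer d p * fact p * fact q * pochhammer (1 - a) q"
    have n1: "pochhammer d p \<noteq> 0" using poch_nz_d[OF d, of 0 p] by simp
    have n3: "pochhammer (1 - a) q \<noteq> 0"
    proof
      assume "pochhammer (1 - a) q = 0"
      then obtain j where "1 - a = - of_nat j" by (auto simp: pochhammer_eq_0_iff)
      then have "a = of_int (int j + 1)" by (simp add: algebra_simps)
      with a show False by (metis Ints_of_int)
    qed
    have Dnz: "D \<noteq> 0" unfolding D_def using n1 n3 by simp
    have lhs: "H5 a d p q * D = (-1)^q * pochhammer (a - of_nat q) p"
    proof -
      have "H5 a d p q * D = poch_int a (int p - int q) * pochhammer (1 - a) q"
        unfolding H5_def D_def using n1 by (simp add: field_simps)
      then show ?thesis using L2[OF a] by simp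
    qed
    have mainD: "bmul (F11_x a d) (F01_negy (1 - a)) p q * D = (-1)^q * pochhammer a p"
      unfolding bmul_F D_def hyp1F1_coeff_def hyp0F1_coeff_def using n1 n3 by (simp add: field_simps)
    have termD: "(\<Sum>l\<in>{1..min k q}. T (k, l) p q) * D
        = (-1)^q * (of_nat (p choose k) * ((-1)^k * pochhammer (of_nat q) k * pochhammer (a + of_nat k) (p - k)))"
      if k: "k \<in> {1..p}" for k
    proof -
      have "(\<Sum>l\<in>{1..min k q}. T (k, l) p q) * D = (\<Sum>l\<in>{1..min k q}. T (k, l) p q * D)"
        by (simp add: sum_distrib_right)
      also have "\<dots> = (\<Sum>l\<in>{1..min k q}. (-1)^q * ((-1)^k * of_nat (p choose k) * fact k * pochhammer (a + of_nat k) (p - k)) * of_nat ((k - 1 choose (l - 1)) * (q choose l)))"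
      proof (rule sum.cong[OF refl])
        fix l assume l: "l \<in> {1..min k q}"
        then have h: "1 \<le> l" "l \<le> k" "k \<le> p" "l \<le> q" using k by auto
        have "T (k, l) p q * D = (-1)^q * ((-1)^k * of_nat (p choose k) * fact k * pochhammer (a + of_nat k) (p - k) * of_nat ((k - 1 choose (l - 1)) * (q choose l)))"
          unfolding Tval D_def c_def using h L4[OF a d h] by simp
        then show "T (k, l) p q * D = (-1)^q * ((-1)^k * of_nat (p choose k) * fact k * pochhammer (a + of_nat k) (p - k)) * of_nat ((k - 1 choose (l - 1)) * (q choose l))"
          by (simp add: algebra_simps)
      qed
      also have "\<dots> = (-1)^q * ((-1)^k * of_nat (p choose k) * pochhammer (a + of_nat k) (p - k)) * ((\<Sum>l\<in>{1..min k q}. of_nat ((k - 1 choose (l - 1)) * (q choose l))) * fact k)"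
        by (simp add: sum_distrib_left sum_distrib_right algebra_simps)
      also have "\<dots> = (-1)^q * ((-1)^k * of_nat (p choose k) * pochhammer (a + of_nat k) (p - k)) * pochhammer (of_nat q) k"
        using k L3[of k q] by simp
      finally show ?thesis by (simp add: algebra_simps)
    qed
    let ?f = "\<lambda>k. of_nat (p choose k) * ((-1)^k * pochhammer (of_nat q) k * pochhammer (a + of_nat k) (p - k)) :: complex"
    have split: "(\<Sum>k\<le>p. ?f k) = ?f 0 + (\<Sum>k\<in>{1..p}. ?f k)"
    proof -
      have "{..p} = insert 0 {1..p}" by auto
      then show ?thesis by simp
    qed
    have "badd (bmul (F11_x a d) (F01_negy (1 - a))) (formal_sum I T) p q * D
        = (-1)^q * pochhammer a p + (\<Sum>k\<in>{1..p}. (\<Sum>l\<in>{1..min k q}. T (k, l) p q) * D)"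
      unfolding badd_def fs2 using mainD by (simp add: distrib_right sum_distrib_right)
    also have "\<dots> = (-1)^q * pochhammer a p + (\<Sum>k\<in>{1..p}. (-1)^q * ?f k)"
      using termD by (intro arg_cong2[where f="(+)"] refl sum.cong) auto
    also have "\<dots> = (-1)^q * (\<Sum>k\<le>p. ?f k)"
      unfolding split by (simp add: sum_distrib_left distrib_left)
    also have "\<dots> = (-1)^q * pochhammer (a - of_nat q) p"
      by (simp add: L1)
    finally have "badd (bmul (F11_x a d) (F01_negy (1 - a))) (formal_sum I T) p q * D = H5 a d p q * D"
      using lhs by simp
    then show ?thesis using Dnz by simp
  qed
  show ?thesis using summ coeff unfolding I_def by blast
qed

end
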